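(* Let $\mathcal{C}$ be a process theory with discarding. Suppose that for each system $A$ we are given a system $L_A$ and a causal process $p_A : A \to A \otimes L_A$ (a pre-leak) such that (a) $e_A := (\mathrm{id}_A \otimes \top_{L_A}) \circ p_A : A \to A$ is idempotent, $e_A \circ e_A = e_A$, and (b) the choice is coherent for composites: $L_{A\otimes B} = L_A \otimes L_B$ and $p_{A\otimes B} = (\mathrm{id}_A \otimes \sigma_{L_A, B} \otimes \mathrm{id}_{L_B})\circ (p_A \otimes p_B)$. Then the following defines a new process theory with discarding: the systems are those of $\mathcal{C}$; the processes $A \to B$ are exactly the processes of $\mathcal{C}$ of the form $e_B \circ f \circ e_A$ with $f : A \to B$ a process of $\mathcal{C}$; composition is that of $\mathcal{C}$ (so the identity on $A$ is $e_A$); and discarding is $\top_A$ (which satisfies $\top_A \circ e_A = \top_A$). Moreover, in this new theory, the process $(e_A \otimes e_{L_A}) \circ p_A \circ e_A : A \to A \otimes L_A$ is a leak for $A$, i.e. discarding its $L_A$ output yields the new identity $e_A$.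
   Context: A process theory is a strict symmetric monoidal category: objects are systems, morphisms are processes, $\circ$ is sequential composition, $\otimes$ parallel composition, $I$ the unit, $\sigma_{X,Y}$ the symmetry. A process theory with discarding has, for every system $A$, a distinguished effect $\top_A : A \to I$ with $\top_{A\otimes B} = \top_A \otimes \top_B$. A process $f:A\to B$ is causal if $\top_B \circ f = \top_A$. A leak for $A$ in a process theory whose identity on $A$ is $\mathrm{id}_A$ is a process $l : A \to A\otimes L$ with $(\mathrm{id}_A \otimes \top_L)\circ l = \mathrm{id}_A$. *)

theory Defs
  imports Main
begin

text \<open>A strict symmetric monoidal category ("process theory"), presented concretely:
  objects of type 'o in the carrier Obj, morphisms of type 'm in the carrier Mor,
  src/tgt, sequential composition cmp g f (= g after f), identities idt,
  tensor on objects tobj and on morphisms tmor, unit object I, symmetry swp A B : A*B -> B*A.\<close>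

definition process_theory ::
  "'o set \<Rightarrow> 'm set \<Rightarrow> ('m \<Rightarrow> 'o) \<Rightarrow> ('m \<Rightarrow> 'o) \<Rightarrow> ('m \<Rightarrow> 'm \<Rightarrow> 'm) \<Rightarrow> ('o \<Rightarrow> 'm)
   \<Rightarrow> ('o \<Rightarrow> 'o \<Rightarrow> 'o) \<Rightarrow> ('m \<Rightarrow> 'm \<Rightarrow> 'm) \<Rightarrow> 'o \<Rightarrow> ('o \<Rightarrow> 'o \<Rightarrow> 'm) \<Rightarrow> bool" where
  "process_theory Obj Mor src tgt cmp idt tobj tmor I swp \<longleftrightarrow>
     \<comment> \<open>category\<close>
     (\<forall>f\<in>Mor. src f \<in> Obj \<and> tgt f \<in> Obj) \<and>
     (\<forall>A\<in>Obj. idt A \<in> Mor \<and> src (idt A) = A \<and> tgt (idt A) = A) \<and>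
     (\<forall>f\<in>Mor. \<forall>g\<in>Mor. tgt f = src g \<longrightarrow>
        cmp g f \<in> Mor \<and> src (cmp g f) = src f \<and> tgt (cmp g f) = tgt g) \<and>
     (\<forall>f\<in>Mor. cmp (idt (tgt f)) f = f \<and> cmp f (idt (src f)) = f) \<and>
     (\<forall>f\<in>Mor. \<forall>g\<in>Mor. \<forall>h\<in>Mor. tgt f = src g \<longrightarrow> tgt g = src h \<longrightarrow>
        cmp h (cmp g f) = cmp (cmp h g) f) \<and>
     \<comment> \<open>strict monoidal structure\<close>
     I \<in> Obj \<and>
     (\<forall>A\<in>Obj. \<forall>B\<in>Obj. tobj A B \<in> Obj) \<and>
     (\<forall>A\<in>Obj. \<forall>B\<in>Obj. \<forall>C\<in>Obj. tobj (tobj A B) C = tobj A (tobj B C)) \<and>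
     (\<forall>A\<in>Obj. tobj I A = A \<and> tobj A I = A) \<and>
     (\<forall>f\<in>Mor. \<forall>g\<in>Mor. tmor f g \<in> Mor \<and> src (tmor f g) = tobj (src f) (src g)
        \<and> tgt (tmor f g) = tobj (tgt f) (tgt g)) \<and>
     (\<forall>f\<in>Mor. \<forall>g\<in>Mor. \<forall>h\<in>Mor. tmor (tmor f g) h = tmor f (tmor g h)) \<and>
     (\<forall>f\<in>Mor. tmor (idt I) f = f \<and> tmor f (idt I) = f) \<and>
     (\<forall>A\<in>Obj. \<forall>B\<in>Obj. tmor (idt A) (idt B) = idt (tobj A B)) \<and>
     (\<forall>f\<in>Mor. \<forall>g\<in>Mor. \<forall>f'\<in>Mor. \<forall>g'\<in>Mor. tgt f = src g \<longrightarrow> tgt f' = src g' \<longrightarrow>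
        tmor (cmp g f) (cmp g' f') = cmp (tmor g g') (tmor f f')) \<and>
     \<comment> \<open>symmetry\<close>
     (\<forall>A\<in>Obj. \<forall>B\<in>Obj. swp A B \<in> Mor \<and> src (swp A B) = tobj A B \<and> tgt (swp A B) = tobj B A) \<and>
     (\<forall>f\<in>Mor. \<forall>g\<in>Mor. cmp (swp (tgt f) (tgt g)) (tmor f g) = cmp (tmor g f) (swp (src f) (src g))) \<and>
     (\<forall>A\<in>Obj. \<forall>B\<in>Obj. cmp (swp B A) (swp A B) = idt (tobj A B)) \<and>
     (\<forall>A\<in>Obj. \<forall>B\<in>Obj. \<forall>C\<in>Obj.
        swp A (tobj B C) = cmp (tmor (idt B) (swp A C)) (tmor (swp A B) (idt C)))"

definition process_theory_disc ::
  "'o set \<Rightarrow> 'm set \<Rightarrow> ('m \<Rightarrow> 'o) \<Rightarrow> ('m \<Rightarrow> 'o) \<Rightarrow> ('m \<Rightarrow> 'm \<Rightarrow> 'm) \<Rightarrow> ('o \<Rightarrow> 'm)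
   \<Rightarrow> ('o \<Rightarrow> 'o \<Rightarrow> 'o) \<Rightarrow> ('m \<Rightarrow> 'm \<Rightarrow> 'm) \<Rightarrow> 'o \<Rightarrow> ('o \<Rightarrow> 'o \<Rightarrow> 'm) \<Rightarrow> ('o \<Rightarrow> 'm) \<Rightarrow> bool" where
  "process_theory_disc Obj Mor src tgt cmp idt tobj tmor I swp disc \<longleftrightarrow>
     process_theory Obj Mor src tgt cmp idt tobj tmor I swp \<and>
     (\<forall>A\<in>Obj. disc A \<in> Mor \<and> src (disc A) = A \<and> tgt (disc A) = I) \<and>
     (\<forall>A\<in>Obj. \<forall>B\<in>Obj. disc (tobj A B) = tmor (disc A) (disc B))"

definition causal :: "('m \<Rightarrow> 'o) \<Rightarrow> ('m \<Rightarrow> 'o) \<Rightarrow> ('m \<Rightarrow> 'm \<Rightarrow> 'm) \<Rightarrow> ('o \<Rightarrow> 'm) \<Rightarrow> 'm \<Rightarrow> bool" where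
  "causal src tgt cmp disc f \<longleftrightarrow> cmp (disc (tgt f)) f = disc (src f)"

definition leak ::
  "'m set \<Rightarrow> ('m \<Rightarrow> 'o) \<Rightarrow> ('m \<Rightarrow> 'o) \<Rightarrow> ('m \<Rightarrow> 'm \<Rightarrow> 'm) \<Rightarrow> ('o \<Rightarrow> 'm)
   \<Rightarrow> ('o \<Rightarrow> 'o \<Rightarrow> 'o) \<Rightarrow> ('m \<Rightarrow> 'm \<Rightarrow> 'm) \<Rightarrow> ('o \<Rightarrow> 'm) \<Rightarrow> 'o \<Rightarrow> 'o \<Rightarrow> 'm \<Rightarrow> bool" where
  "leak Mor src tgt cmp idt tobj tmor disc A L l \<longleftrightarrow>
     l \<in> Mor \<and> src l = A \<and> tgt l = tobj A L \<and> cmp (tmor (idt A) (disc L)) l = idt A"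

end

theory Submission
  imports Defs
begin

locale pt =
  fixes Obj :: "'o set" and Mor :: "'m set"
    and src tgt :: "'m \<Rightarrow> 'o" and cmp :: "'m \<Rightarrow> 'm \<Rightarrow> 'm" and idt :: "'o \<Rightarrow> 'm"
    and tobj :: "'o \<Rightarrow> 'o \<Rightarrow> 'o" and tmor :: "'m \<Rightarrow> 'm \<Rightarrow> 'm" and I :: 'o
    and swp :: "'o \<Rightarrow> 'o \<Rightarrow> 'm" and disc :: "'o \<Rightarrow> 'm"
    and L :: "'o \<Rightarrow> 'o" and p :: "'o \<Rightarrow> 'm" and e :: "'o \<Rightarrow> 'm"
  assumes C: "process_theory_disc Obj Mor src tgt cmp idt tobj tmor I swp disc"
    and L_obj: "\<forall>A\<in>Obj. L A \<in> Obj"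
    and p_typ: "\<forall>A\<in>Obj. p A \<in> Mor \<and> src (p A) = A \<and> tgt (p A) = tobj A (L A)"
    and p_causal: "\<forall>A\<in>Obj. causal src tgt cmp disc (p A)"
    and e_def: "\<forall>A. e A = cmp (tmor (idt A) (disc (L A))) (p A)"
    and e_idem: "\<forall>A\<in>Obj. cmp (e A) (e A) = e A"
    and L_tensor: "\<forall>A\<in>Obj. \<forall>B\<in>Obj. L (tobj A B) = tobj (L A) (L B)"
    and p_tensor: "\<forall>A\<in>Obj. \<forall>B\<in>Obj.
        p (tobj A B) = cmp (tmor (tmor (idt A) (swp (L A) B)) (idt (L B))) (tmor (p A) (p B))"
begin

lemmas PT0 = C[unfolded process_theory_disc_def, THEN conjunct1, unfolded process_theory_def]
lemmas P1 = PT0[THEN conjunct1]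
lemmas P2 = PT0[THEN conjunct2, THEN conjunct1]
lemmas P3 = PT0[THEN conjunct2, THEN conjunct2, THEN conjunct1]
lemmas P4 = PT0[THEN conjunct2, THEN conjunct2, THEN conjunct2, THEN conjunct1]
lemmas P5 = PT0[THEN conjunct2, THEN conjunct2, THEN conjunct2, THEN conjunct2, THEN conjunct1]
lemmas P6 = PT0[THEN conjunct2, THEN conjunct2, THEN conjunct2, THEN conjunct2, THEN conjunct2, THEN conjunct1]
lemmas P7 = PT0[THEN conjunct2, THEN conjunct2, THEN conjunct2, THEN conjunct2, THEN conjunct2, THEN conjunct2, THEN conjunct1]
lemmas P8 = PT0[THEN conjunct2, THEN conjunct2, THEN conjunct2, THEN conjunct2, THEN conjunct2, THEN conjunct2, THEN conjunct2, THEN conjunct1]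
lemmas P9 = PT0[THEN conjunct2, THEN conjunct2, THEN conjunct2, THEN conjunct2, THEN conjunct2, THEN conjunct2, THEN conjunct2, THEN conjunct2, THEN conjunct1]
lemmas P10 = PT0[THEN conjunct2, THEN conjunct2, THEN conjunct2, THEN conjunct2, THEN conjunct2, THEN conjunct2, THEN conjunct2, THEN conjunct2, THEN conjunct2, THEN conjunct1]
lemmas P11 = PT0[THEN conjunct2, THEN conjunct2, THEN conjunct2, THEN conjunct2, THEN conjunct2, THEN conjunct2, THEN conjunct2, THEN conjunct2, THEN conjunct2, THEN conjunct2, THEN conjunct1]
lemmas P12 = PT0[THEN conjunct2, THEN conjunct2, THEN conjunct2, THEN conjunct2, THEN conjunct2, THEN conjunct2, THEN conjunct2, THEN conjunct2, THEN conjunct2, THEN conjunct2, THEN conjunct2, THEN conjunct1]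
lemmas P13 = PT0[THEN conjunct2, THEN conjunct2, THEN conjunct2, THEN conjunct2, THEN conjunct2, THEN conjunct2, THEN conjunct2, THEN conjunct2, THEN conjunct2, THEN conjunct2, THEN conjunct2, THEN conjunct2, THEN conjunct1]
lemmas P14 = PT0[THEN conjunct2, THEN conjunct2, THEN conjunct2, THEN conjunct2, THEN conjunct2, THEN conjunct2, THEN conjunct2, THEN conjunct2, THEN conjunct2, THEN conjunct2, THEN conjunct2, THEN conjunct2, THEN conjunct2, THEN conjunct1]
lemmas P15 = PT0[THEN conjunct2, THEN conjunct2, THEN conjunct2, THEN conjunct2, THEN conjunct2, THEN conjunct2, THEN conjunct2, THEN conjunct2, THEN conjunct2, THEN conjunct2, THEN conjunct2, THEN conjunct2, THEN conjunct2, THEN conjunct2, THEN conjunct1]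
lemmas P16 = PT0[THEN conjunct2, THEN conjunct2, THEN conjunct2, THEN conjunct2, THEN conjunct2, THEN conjunct2, THEN conjunct2, THEN conjunct2, THEN conjunct2, THEN conjunct2, THEN conjunct2, THEN conjunct2, THEN conjunct2, THEN conjunct2, THEN conjunct2, THEN conjunct1]
lemmas P17 = PT0[THEN conjunct2, THEN conjunct2, THEN conjunct2, THEN conjunct2, THEN conjunct2, THEN conjunct2, THEN conjunct2, THEN conjunct2, THEN conjunct2, THEN conjunct2, THEN conjunct2, THEN conjunct2, THEN conjunct2, THEN conjunct2, THEN conjunct2, THEN conjunct2, THEN conjunct1]
lemmas P18 = PT0[THEN conjunct2, THEN conjunct2, THEN conjunct2, THEN conjunct2, THEN conjunct2, THEN conjunct2, THEN conjunct2, THEN conjunct2, THEN conjunct2, THEN conjunct2, THEN conjunct2, THEN conjunct2, THEN conjunct2, THEN conjunct2, THEN conjunct2, THEN conjunct2, THEN conjunct2]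
lemmas D1 = C[unfolded process_theory_disc_def, THEN conjunct2, THEN conjunct1]
lemmas D2 = C[unfolded process_theory_disc_def, THEN conjunct2, THEN conjunct2]

lemma src_Obj[simp]: "f \<in> Mor \<Longrightarrow> src f \<in> Obj" using P1 by blast
lemma tgt_Obj[simp]: "f \<in> Mor \<Longrightarrow> tgt f \<in> Obj" using P1 by blast
lemma idt_Mor[simp]: "A \<in> Obj \<Longrightarrow> idt A \<in> Mor" using P2 by blast
lemma src_idt[simp]: "A \<in> Obj \<Longrightarrow> src (idt A) = A" using P2 by blast
lemma tgt_idt[simp]: "A \<in> Obj \<Longrightarrow> tgt (idt A) = A" using P2 by blast
lemma cmp_Mor[simp]: "f \<in> Mor \<Longrightarrow> g \<in> Mor \<Longrightarrow> tgt f = src g \<Longrightarrow> cmp g f \<in> Mor" using P3 by blast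
lemma src_cmp[simp]: "f \<in> Mor \<Longrightarrow> g \<in> Mor \<Longrightarrow> tgt f = src g \<Longrightarrow> src (cmp g f) = src f" using P3 by blast
lemma tgt_cmp[simp]: "f \<in> Mor \<Longrightarrow> g \<in> Mor \<Longrightarrow> tgt f = src g \<Longrightarrow> tgt (cmp g f) = tgt g" using P3 by blast
lemma idl: "f \<in> Mor \<Longrightarrow> cmp (idt (tgt f)) f = f" using P4 by blast
lemma idr: "f \<in> Mor \<Longrightarrow> cmp f (idt (src f)) = f" using P4 by blast
lemma assoc: "f \<in> Mor \<Longrightarrow> g \<in> Mor \<Longrightarrow> h \<in> Mor \<Longrightarrow> tgt f = src g \<Longrightarrow> tgt g = src h \<Longrightarrow>
    cmp h (cmp g f) = cmp (cmp h g) f" using P5 by blast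
lemma I_Obj[simp]: "I \<in> Obj" using P6 by blast
lemma tobj_Obj[simp]: "A \<in> Obj \<Longrightarrow> B \<in> Obj \<Longrightarrow> tobj A B \<in> Obj" using P7 by blast
lemma tobj_assoc: "A \<in> Obj \<Longrightarrow> B \<in> Obj \<Longrightarrow> C \<in> Obj \<Longrightarrow> tobj (tobj A B) C = tobj A (tobj B C)" using P8 by blast
lemma tobj_Il[simp]: "A \<in> Obj \<Longrightarrow> tobj I A = A" using P9 by blast
lemma tobj_Ir[simp]: "A \<in> Obj \<Longrightarrow> tobj A I = A" using P9 by blast
lemma tmor_Mor[simp]: "f \<in> Mor \<Longrightarrow> g \<in> Mor \<Longrightarrow> tmor f g \<in> Mor" using P10 by blast
lemma src_tmor[simp]: "f \<in> Mor \<Longrightarrow> g \<in> Mor \<Longrightarrow> src (tmor f g) = tobj (src f) (src g)" using P10 by blast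
lemma tgt_tmor[simp]: "f \<in> Mor \<Longrightarrow> g \<in> Mor \<Longrightarrow> tgt (tmor f g) = tobj (tgt f) (tgt g)" using P10 by blast
lemma tmor_assoc: "f \<in> Mor \<Longrightarrow> g \<in> Mor \<Longrightarrow> h \<in> Mor \<Longrightarrow> tmor (tmor f g) h = tmor f (tmor g h)" using P11 by blast
lemma tmor_Il[simp]: "f \<in> Mor \<Longrightarrow> tmor (idt I) f = f" using P12 by blast
lemma tmor_Ir[simp]: "f \<in> Mor \<Longrightarrow> tmor f (idt I) = f" using P12 by blast
lemma tmor_idt: "A \<in> Obj \<Longrightarrow> B \<in> Obj \<Longrightarrow> tmor (idt A) (idt B) = idt (tobj A B)" using P13 by blast
lemma interchange: "f \<in> Mor \<Longrightarrow> g \<in> Mor \<Longrightarrow> f' \<in> Mor \<Longrightarrow> g' \<in> Mor \<Longrightarrow> tgt f = src g \<Longrightarrow> tgt f' = src g' \<Longrightarrow>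
        tmor (cmp g f) (cmp g' f') = cmp (tmor g g') (tmor f f')" using P14 by blast
lemma swp_Mor[simp]: "A \<in> Obj \<Longrightarrow> B \<in> Obj \<Longrightarrow> swp A B \<in> Mor" using P15 by blast
lemma src_swp[simp]: "A \<in> Obj \<Longrightarrow> B \<in> Obj \<Longrightarrow> src (swp A B) = tobj A B" using P15 by blast
lemma tgt_swp[simp]: "A \<in> Obj \<Longrightarrow> B \<in> Obj \<Longrightarrow> tgt (swp A B) = tobj B A" using P15 by blast
lemma swp_nat: "f \<in> Mor \<Longrightarrow> g \<in> Mor \<Longrightarrow> cmp (swp (tgt f) (tgt g)) (tmor f g) = cmp (tmor g f) (swp (src f) (src g))" using P16 by blast
lemma swp_inv: "A \<in> Obj \<Longrightarrow> B \<in> Obj \<Longrightarrow> cmp (swp B A) (swp A B) = idt (tobj A B)" using P17 by blast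
lemma hex: "A \<in> Obj \<Longrightarrow> B \<in> Obj \<Longrightarrow> C \<in> Obj \<Longrightarrow>
        swp A (tobj B C) = cmp (tmor (idt B) (swp A C)) (tmor (swp A B) (idt C))" using P18 by blast
lemma disc_Mor[simp]: "A \<in> Obj \<Longrightarrow> disc A \<in> Mor" using D1 by blast
lemma src_disc[simp]: "A \<in> Obj \<Longrightarrow> src (disc A) = A" using D1 by blast
lemma tgt_disc[simp]: "A \<in> Obj \<Longrightarrow> tgt (disc A) = I" using D1 by blast
lemma disc_tensor: "A \<in> Obj \<Longrightarrow> B \<in> Obj \<Longrightarrow> disc (tobj A B) = tmor (disc A) (disc B)" using D2 by blast

lemma L_Obj[simp]: "A \<in> Obj \<Longrightarrow> L A \<in> Obj" using L_obj by blast
lemma p_Mor[simp]: "A \<in> Obj \<Longrightarrow> p A \<in> Mor" using p_typ by blast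
lemma src_p[simp]: "A \<in> Obj \<Longrightarrow> src (p A) = A" using p_typ by blast
lemma tgt_p[simp]: "A \<in> Obj \<Longrightarrow> tgt (p A) = tobj A (L A)" using p_typ by blast
lemma p_caus: "A \<in> Obj \<Longrightarrow> cmp (disc (tobj A (L A))) (p A) = disc A"
  using p_causal unfolding causal_def by simp
lemma e_eq: "e A = cmp (tmor (idt A) (disc (L A))) (p A)" using e_def by blast
lemma e_Mor[simp]: "A \<in> Obj \<Longrightarrow> e A \<in> Mor" by (simp add: e_eq)
lemma src_e[simp]: "A \<in> Obj \<Longrightarrow> src (e A) = A" by (simp add: e_eq)
lemma tgt_e[simp]: "A \<in> Obj \<Longrightarrow> tgt (e A) = A" by (simp add: e_eq)
lemma e_id: "A \<in> Obj \<Longrightarrow> cmp (e A) (e A) = e A" using e_idem by blast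


lemma assoc_r: "f \<in> Mor \<Longrightarrow> g \<in> Mor \<Longrightarrow> h \<in> Mor \<Longrightarrow> tgt f = src g \<Longrightarrow> tgt g = src h \<Longrightarrow>
    cmp (cmp h g) f = cmp h (cmp g f)" by (rule assoc[symmetric])

lemma idl'[simp]: "f \<in> Mor \<Longrightarrow> B = tgt f \<Longrightarrow> cmp (idt B) f = f" using idl by blast
lemma idr'[simp]: "f \<in> Mor \<Longrightarrow> A = src f \<Longrightarrow> cmp f (idt A) = f" using idr by blast

lemma swp_AI: assumes A: "A \<in> Obj" shows "swp A I = idt A"
proof -
  have h: "swp A I = cmp (swp A I) (swp A I)" using hex[of A I I] A by simp
  have "idt A = cmp (swp I A) (swp A I)" using swp_inv[of A I] A by simp
  also have "\<dots> = cmp (swp I A) (cmp (swp A I) (swp A I))"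
    by (rule arg_cong[where f="cmp (swp I A)"], rule h)
  also have "\<dots> = cmp (cmp (swp I A) (swp A I)) (swp A I)" using A by (intro assoc) simp_all
  also have "\<dots> = cmp (idt A) (swp A I)" using swp_inv[of A I] A by simp
  also have "\<dots> = swp A I" using A by simp
  finally show ?thesis by simp
qed

lemma swp_IA: assumes A: "A \<in> Obj" shows "swp I A = idt A"
proof -
  have "swp I A = cmp (swp I A) (idt A)" using A by simp
  also have "\<dots> = cmp (swp I A) (swp A I)" using A by (simp add: swp_AI)
  also have "\<dots> = idt A" using swp_inv[of A I] A by simp
  finally show ?thesis .
qed

lemma e_tensor: assumes A: "A \<in> Obj" and B: "B \<in> Obj"
  shows "e (tobj A B) = tmor (e A) (e B)"
proof -
  let ?a = "idt A" and ?b = "idt B" and ?dA = "disc (L A)" and ?dB = "disc (L B)" and ?s = "swp (L A) B"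
  have "e (tobj A B) = cmp (tmor (tmor ?a ?b) (tmor ?dA ?dB)) (cmp (tmor (tmor ?a ?s) (idt (L B))) (tmor (p A) (p B)))"
    using A B L_tensor p_tensor by (simp add: e_eq disc_tensor tmor_idt)
  also have "\<dots> = cmp (cmp (tmor (tmor ?a ?b) (tmor ?dA ?dB)) (tmor (tmor ?a ?s) (idt (L B)))) (tmor (p A) (p B))"
    using A B by (intro assoc) (simp_all add: tobj_assoc)
  also have "tmor (tmor ?a ?b) (tmor ?dA ?dB) = tmor (tmor ?a (tmor ?b ?dA)) ?dB"
    using A B by (simp add: tmor_assoc)
  also have "cmp (tmor (tmor ?a (tmor ?b ?dA)) ?dB) (tmor (tmor ?a ?s) (idt (L B)))
      = tmor (cmp (tmor ?a (tmor ?b ?dA)) (tmor ?a ?s)) (cmp ?dB (idt (L B)))"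
    using A B by (intro interchange[symmetric]) simp_all
  also have "cmp (tmor ?a (tmor ?b ?dA)) (tmor ?a ?s) = tmor (cmp ?a ?a) (cmp (tmor ?b ?dA) ?s)"
    using A B by (intro interchange[symmetric]) simp_all
  also have "cmp (tmor ?b ?dA) ?s = tmor ?dA ?b"
  proof -
    have "cmp (swp I B) (tmor ?dA ?b) = cmp (tmor ?b ?dA) ?s" using swp_nat[of ?dA ?b] A B by simp
    then show ?thesis using A B by (simp add: swp_IA)
  qed
  also have "tmor (tmor (cmp ?a ?a) (tmor ?dA ?b)) (cmp ?dB (idt (L B))) = tmor (tmor ?a ?dA) (tmor ?b ?dB)"
    using A B by (simp add: tmor_assoc)
  also have "cmp (tmor (tmor ?a ?dA) (tmor ?b ?dB)) (tmor (p A) (p B)) = tmor (cmp (tmor ?a ?dA) (p A)) (cmp (tmor ?b ?dB) (p B))"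
    using A B by (intro interchange[symmetric]) simp_all
  also have "\<dots> = tmor (e A) (e B)" by (simp add: e_eq)
  finally show ?thesis .
qed


abbreviation M' where
  "M' \<equiv> {m. \<exists>A\<in>Obj. \<exists>B\<in>Obj. \<exists>f\<in>Mor. src f = A \<and> tgt f = B \<and> m = cmp (e B) (cmp f (e A))}"

abbreviation swp' where "swp' \<equiv> (\<lambda>A B. cmp (e (tobj B A)) (cmp (swp A B) (e (tobj A B))))"

lemma Mp_char: "m \<in> M' \<longleftrightarrow> m \<in> Mor \<and> cmp (e (tgt m)) m = m \<and> cmp m (e (src m)) = m"
proof
  assume "m \<in> M'"
  then obtain A B f where A: "A \<in> Obj" and B: "B \<in> Obj" and f: "f \<in> Mor" "src f = A" "tgt f = B"
    and m: "m = cmp (e B) (cmp f (e A))" by blast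
  have "m \<in> Mor" using A B f m by simp
  moreover have "cmp (e (tgt m)) m = m"
  proof -
    have "cmp (e B) m = cmp (cmp (e B) (e B)) (cmp f (e A))" unfolding m using A B f by (intro assoc) simp_all
    then show ?thesis using A B f m by (simp add: e_id)
  qed
  moreover have "cmp m (e (src m)) = m"
  proof -
    have "cmp m (e A) = cmp (e B) (cmp (cmp f (e A)) (e A))" unfolding m using A B f by (intro assoc_r) simp_all
    also have "cmp (cmp f (e A)) (e A) = cmp f (cmp (e A) (e A))" using A B f by (intro assoc_r) simp_all
    finally show ?thesis using A B f m by (simp add: e_id)
  qed
  ultimately show "m \<in> Mor \<and> cmp (e (tgt m)) m = m \<and> cmp m (e (src m)) = m" by blast
next
  assume h: "m \<in> Mor \<and> cmp (e (tgt m)) m = m \<and> cmp m (e (src m)) = m"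
  then have "m = cmp (e (tgt m)) (cmp m (e (src m)))" by simp
  then show "m \<in> M'" using h
    by (intro CollectI bexI[where x="src m"] bexI[where x="tgt m"] bexI[where x=m]) simp_all
qed

lemma Mp_Mor: "m \<in> M' \<Longrightarrow> m \<in> Mor" using Mp_char by blast
lemma Mp_l: "m \<in> M' \<Longrightarrow> cmp (e (tgt m)) m = m" using Mp_char by blast
lemma Mp_r: "m \<in> M' \<Longrightarrow> cmp m (e (src m)) = m" using Mp_char by blast

lemma e_Mp: "A \<in> Obj \<Longrightarrow> e A \<in> M'" by (rule Mp_char[THEN iffD2]) (simp add: e_id)

lemma cmp_Mp: assumes f: "f \<in> M'" and g: "g \<in> M'" and t: "tgt f = src g" shows "cmp g f \<in> M'"
proof -
  have fM: "f \<in> Mor" and gM: "g \<in> Mor" using f g Mp_Mor by auto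
  have "cmp (e (tgt g)) (cmp g f) = cmp (cmp (e (tgt g)) g) f" using fM gM t by (intro assoc) simp_all
  then have 1: "cmp (e (tgt g)) (cmp g f) = cmp g f" using Mp_l[OF g] by simp
  have "cmp (cmp g f) (e (src f)) = cmp g (cmp f (e (src f)))" using fM gM t by (intro assoc_r) simp_all
  then have 2: "cmp (cmp g f) (e (src f)) = cmp g f" using Mp_r[OF f] by simp
  show ?thesis using 1 2 fM gM t by (intro Mp_char[THEN iffD2]) simp
qed

lemma tmor_Mp: assumes f: "f \<in> M'" and g: "g \<in> M'" shows "tmor f g \<in> M'"
proof -
  have fM: "f \<in> Mor" and gM: "g \<in> Mor" using f g Mp_Mor by auto
  have "cmp (e (tgt (tmor f g))) (tmor f g) = cmp (tmor (e (tgt f)) (e (tgt g))) (tmor f g)"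
    using fM gM by (simp add: e_tensor)
  also have "\<dots> = tmor (cmp (e (tgt f)) f) (cmp (e (tgt g)) g)" using fM gM by (intro interchange[symmetric]) simp_all
  also have "\<dots> = tmor f g" using Mp_l[OF f] Mp_l[OF g] by simp
  finally have 1: "cmp (e (tgt (tmor f g))) (tmor f g) = tmor f g" .
  have "cmp (tmor f g) (e (src (tmor f g))) = cmp (tmor f g) (tmor (e (src f)) (e (src g)))"
    using fM gM by (simp add: e_tensor)
  also have "\<dots> = tmor (cmp f (e (src f))) (cmp g (e (src g)))" using fM gM by (intro interchange[symmetric]) simp_all
  also have "\<dots> = tmor f g" using Mp_r[OF f] Mp_r[OF g] by simp
  finally have 2: "cmp (tmor f g) (e (src (tmor f g))) = tmor f g" .
  show ?thesis using 1 2 fM gM by (intro Mp_char[THEN iffD2]) simp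
qed

lemma tmor_eIl: assumes f: "f \<in> M'" shows "tmor (e I) f = f"
proof -
  have fM: "f \<in> Mor" using f Mp_Mor by auto
  have "tmor (e I) f = tmor (cmp (e I) (idt I)) (cmp (e (tgt f)) f)" using Mp_l[OF f] by simp
  also have "\<dots> = cmp (tmor (e I) (e (tgt f))) (tmor (idt I) f)" using fM by (intro interchange) simp_all
  also have "\<dots> = f" using fM Mp_l[OF f] by (simp add: e_tensor[symmetric])
  finally show ?thesis .
qed

lemma tmor_eIr: assumes f: "f \<in> M'" shows "tmor f (e I) = f"
proof -
  have fM: "f \<in> Mor" using f Mp_Mor by auto
  have "tmor f (e I) = tmor (cmp (e (tgt f)) f) (cmp (e I) (idt I))" using Mp_l[OF f] by simp
  also have "\<dots> = cmp (tmor (e (tgt f)) (e I)) (tmor f (idt I))" using fM by (intro interchange) simp_all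
  also have "\<dots> = f" using fM Mp_l[OF f] by (simp add: e_tensor[symmetric])
  finally show ?thesis .
qed

lemma swp_e: assumes A: "A \<in> Obj" and B: "B \<in> Obj"
  shows "cmp (swp A B) (e (tobj A B)) = cmp (e (tobj B A)) (swp A B)"
  using swp_nat[of "e A" "e B"] A B by (simp add: e_tensor)

lemma swp'_1: assumes A: "A \<in> Obj" and B: "B \<in> Obj" shows "swp' A B = cmp (swp A B) (e (tobj A B))"
proof -
  have "swp' A B = cmp (e (tobj B A)) (cmp (e (tobj B A)) (swp A B))" using swp_e[OF A B] by simp
  also have "\<dots> = cmp (cmp (e (tobj B A)) (e (tobj B A))) (swp A B)" using A B by (intro assoc) simp_all
  also have "\<dots> = cmp (swp A B) (e (tobj A B))" using A B by (simp add: e_id swp_e)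
  finally show ?thesis .
qed

lemma swp'_2: assumes A: "A \<in> Obj" and B: "B \<in> Obj" shows "swp' A B = cmp (e (tobj B A)) (swp A B)"
  using swp'_1[OF A B] swp_e[OF A B] by simp

lemma swp'_Mp: "A \<in> Obj \<Longrightarrow> B \<in> Obj \<Longrightarrow> swp' A B \<in> M'"
  by (rule CollectI, rule bexI[where x="tobj A B"], rule bexI[where x="tobj B A"], rule bexI[where x="swp A B"]) simp_all

lemma swp'_nat: assumes f: "f \<in> M'" and g: "g \<in> M'"
  shows "cmp (swp' (tgt f) (tgt g)) (tmor f g) = cmp (tmor g f) (swp' (src f) (src g))"
proof -
  have fM: "f \<in> Mor" and gM: "g \<in> Mor" using f g Mp_Mor by auto
  have "cmp (swp' (tgt f) (tgt g)) (tmor f g) = cmp (cmp (swp (tgt f) (tgt g)) (e (tobj (tgt f) (tgt g)))) (tmor f g)"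
    using fM gM by (simp add: swp'_1)
  also have "\<dots> = cmp (swp (tgt f) (tgt g)) (cmp (e (tobj (tgt f) (tgt g))) (tmor f g))"
    using fM gM by (intro assoc_r) simp_all
  also have "cmp (e (tobj (tgt f) (tgt g))) (tmor f g) = tmor f g"
    using Mp_l[OF tmor_Mp[OF f g]] fM gM by simp
  also have "cmp (swp (tgt f) (tgt g)) (tmor f g) = cmp (tmor g f) (swp (src f) (src g))" by (rule swp_nat[OF fM gM])
  also have "tmor g f = cmp (tmor g f) (e (tobj (src g) (src f)))"
    using Mp_r[OF tmor_Mp[OF g f]] fM gM by simp
  also have "cmp (cmp (tmor g f) (e (tobj (src g) (src f)))) (swp (src f) (src g)) = cmp (tmor g f) (cmp (e (tobj (src g) (src f))) (swp (src f) (src g)))"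
    using fM gM by (intro assoc_r) simp_all
  also have "cmp (e (tobj (src g) (src f))) (swp (src f) (src g)) = swp' (src f) (src g)"
    using fM gM by (simp add: swp'_2)
  finally show ?thesis .
qed

lemma swp'_inv: assumes A: "A \<in> Obj" and B: "B \<in> Obj" shows "cmp (swp' B A) (swp' A B) = e (tobj A B)"
proof -
  have "cmp (swp' B A) (swp' A B) = cmp (cmp (swp B A) (e (tobj B A))) (cmp (e (tobj B A)) (swp A B))"
    by (simp only: swp'_1[OF B A] swp'_2[OF A B])
  also have "\<dots> = cmp (swp B A) (cmp (e (tobj B A)) (cmp (e (tobj B A)) (swp A B)))" using A B by (intro assoc_r) simp_all
  also have "cmp (e (tobj B A)) (cmp (e (tobj B A)) (swp A B)) = cmp (cmp (e (tobj B A)) (e (tobj B A))) (swp A B)"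
    using A B by (intro assoc) simp_all
  also have "\<dots> = cmp (swp A B) (e (tobj A B))" using A B by (simp add: e_id swp_e)
  also have "cmp (swp B A) (cmp (swp A B) (e (tobj A B))) = cmp (cmp (swp B A) (swp A B)) (e (tobj A B))"
    using A B by (intro assoc) simp_all
  also have "\<dots> = e (tobj A B)" using A B by (simp add: swp_inv)
  finally show ?thesis .
qed

lemma swp'_hex: assumes A: "A \<in> Obj" and B: "B \<in> Obj" and C: "C \<in> Obj"
  shows "swp' A (tobj B C) = cmp (tmor (e B) (swp' A C)) (tmor (swp' A B) (e C))"
proof -
  let ?X = "tmor (idt B) (swp A C)" and ?Y = "tmor (swp A B) (idt C)"
  have 1: "tmor (e B) (swp' A C) = cmp ?X (e (tobj B (tobj A C)))"
  proof -
    have "tmor (e B) (swp' A C) = tmor (cmp (idt B) (e B)) (cmp (swp A C) (e (tobj A C)))"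
      using A B C by (simp add: swp'_1)
    also have "\<dots> = cmp ?X (tmor (e B) (e (tobj A C)))" using A B C by (intro interchange) simp_all
    finally show ?thesis using A B C by (simp add: e_tensor)
  qed
  have 2: "tmor (swp' A B) (e C) = cmp ?Y (e (tobj A (tobj B C)))"
  proof -
    have "tmor (swp' A B) (e C) = tmor (cmp (swp A B) (e (tobj A B))) (cmp (idt C) (e C))"
      using A B C by (simp add: swp'_1)
    also have "\<dots> = cmp ?Y (tmor (e (tobj A B)) (e C))" using A B C by (intro interchange) simp_all
    finally show ?thesis using A B C by (simp add: e_tensor tobj_assoc tmor_assoc)
  qed
  have 3: "cmp (e (tobj B (tobj A C))) ?Y = cmp ?Y (e (tobj A (tobj B C)))"
  proof -
    have "cmp (e (tobj B (tobj A C))) ?Y = cmp (tmor (e (tobj B A)) (e C)) ?Y"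
      using A B C by (simp add: e_tensor tobj_assoc tmor_assoc)
    also have "\<dots> = tmor (cmp (e (tobj B A)) (swp A B)) (cmp (e C) (idt C))" using A B C by (intro interchange[symmetric]) simp_all
    also have "\<dots> = tmor (cmp (swp A B) (e (tobj A B))) (cmp (idt C) (e C))" using A B C by (simp add: swp_e)
    also have "\<dots> = cmp ?Y (tmor (e (tobj A B)) (e C))" using A B C by (intro interchange) simp_all
    finally show ?thesis using A B C by (simp add: e_tensor tobj_assoc tmor_assoc)
  qed
  have "cmp (tmor (e B) (swp' A C)) (tmor (swp' A B) (e C)) = cmp (cmp ?X (e (tobj B (tobj A C)))) (cmp ?Y (e (tobj A (tobj B C))))"
    using 1 2 by simp
  also have "\<dots> = cmp ?X (cmp (e (tobj B (tobj A C))) (cmp ?Y (e (tobj A (tobj B C)))))"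
    using A B C by (intro assoc_r) (simp_all add: tobj_assoc)
  also have "cmp (e (tobj B (tobj A C))) (cmp ?Y (e (tobj A (tobj B C)))) = cmp (cmp (e (tobj B (tobj A C))) ?Y) (e (tobj A (tobj B C)))"
    using A B C by (intro assoc) (simp_all add: tobj_assoc)
  also have "\<dots> = cmp (cmp ?Y (e (tobj A (tobj B C)))) (e (tobj A (tobj B C)))" using 3 by simp
  also have "\<dots> = cmp ?Y (e (tobj A (tobj B C)))" using A B C by (simp add: assoc_r e_id tobj_assoc)
  also have "cmp ?X (cmp ?Y (e (tobj A (tobj B C)))) = cmp (cmp ?X ?Y) (e (tobj A (tobj B C)))"
    using A B C by (intro assoc) (simp_all add: tobj_assoc)
  also have "cmp ?X ?Y = swp A (tobj B C)" using hex[OF A B C] by simp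
  also have "cmp (swp A (tobj B C)) (e (tobj A (tobj B C))) = swp' A (tobj B C)" using A B C by (simp add: swp'_1)
  finally show ?thesis ..
qed


lemma disc_e: assumes A: "A \<in> Obj" shows "cmp (disc A) (e A) = disc A"
proof -
  have "cmp (disc A) (e A) = cmp (cmp (disc A) (tmor (idt A) (disc (L A)))) (p A)"
    using A by (simp add: e_eq assoc)
  also have "cmp (disc A) (tmor (idt A) (disc (L A))) = cmp (tmor (disc A) (idt I)) (tmor (idt A) (disc (L A)))"
    using A by simp
  also have "\<dots> = tmor (cmp (disc A) (idt A)) (cmp (idt I) (disc (L A)))"
    using A by (intro interchange[symmetric]) simp_all
  also have "\<dots> = disc (tobj A (L A))" using A by (simp add: disc_tensor)
  also have "cmp (disc (tobj A (L A))) (p A) = disc A" using p_caus[OF A] .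
  finally show ?thesis .
qed

lemma eI: "e I = disc I"
  using p_caus[OF I_Obj] by (simp add: e_eq)

lemma eI_disc: assumes A: "A \<in> Obj" shows "cmp (e I) (disc A) = disc A"
proof -
  have "disc A = disc (tobj I A)" using A by simp
  also have "\<dots> = tmor (cmp (disc I) (idt I)) (cmp (idt I) (disc A))" using A disc_tensor[OF I_Obj A] by simp
  also have "\<dots> = cmp (tmor (disc I) (idt I)) (tmor (idt I) (disc A))" using A by (intro interchange) simp_all
  also have "\<dots> = cmp (e I) (disc A)" using A by (simp add: eI)
  finally show ?thesis ..
qed

lemma disc_Mp: "A \<in> Obj \<Longrightarrow> disc A \<in> M'"
  by (rule Mp_char[THEN iffD2]) (simp add: disc_e eI_disc)

lemma leak_Mp: assumes A: "A \<in> Obj"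
  shows "cmp (tmor (e A) (e (L A))) (cmp (p A) (e A)) \<in> M'"
proof -
  let ?T = "tmor (e A) (e (L A))" and ?Z = "cmp (p A) (e A)"
  have TT: "cmp ?T ?T = ?T" using A by (simp add: interchange[symmetric] e_id)
  have 1: "cmp (e (tgt (cmp ?T ?Z))) (cmp ?T ?Z) = cmp ?T ?Z"
  proof -
    have "cmp (e (tgt (cmp ?T ?Z))) (cmp ?T ?Z) = cmp ?T (cmp ?T ?Z)" using A by (simp add: e_tensor)
    also have "\<dots> = cmp (cmp ?T ?T) ?Z" using A by (intro assoc) simp_all
    finally show ?thesis using TT by simp
  qed
  have 2: "cmp (cmp ?T ?Z) (e (src (cmp ?T ?Z))) = cmp ?T ?Z"
  proof -
    have "cmp (cmp ?T ?Z) (e (src (cmp ?T ?Z))) = cmp ?T (cmp ?Z (e A))" using A by (simp add: assoc_r)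
    also have "cmp ?Z (e A) = cmp (p A) (cmp (e A) (e A))" using A by (intro assoc_r) simp_all
    finally show ?thesis using A by (simp add: e_id)
  qed
  show ?thesis using 1 2 A by (intro Mp_char[THEN iffD2]) simp
qed

lemma leak_eq: assumes A: "A \<in> Obj"
  shows "cmp (tmor (e A) (disc (L A))) (cmp (tmor (e A) (e (L A))) (cmp (p A) (e A))) = e A"
proof -
  let ?T = "tmor (e A) (e (L A))" and ?Z = "cmp (p A) (e A)" and ?D = "tmor (idt A) (disc (L A))"
  have "cmp (tmor (e A) (disc (L A))) (cmp ?T ?Z) = cmp (cmp (tmor (e A) (disc (L A))) ?T) ?Z"
    using A by (intro assoc) simp_all
  also have "cmp (tmor (e A) (disc (L A))) ?T = tmor (cmp (e A) (e A)) (cmp (disc (L A)) (e (L A)))"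
    using A by (intro interchange[symmetric]) simp_all
  also have "\<dots> = tmor (cmp (e A) (idt A)) (cmp (idt I) (disc (L A)))" using A by (simp add: e_id disc_e)
  also have "\<dots> = cmp (tmor (e A) (idt I)) ?D" using A by (intro interchange) simp_all
  also have "\<dots> = cmp (e A) ?D" using A by simp
  also have "cmp (cmp (e A) ?D) ?Z = cmp (e A) (cmp ?D ?Z)" using A by (intro assoc_r) simp_all
  also have "cmp ?D ?Z = cmp (cmp ?D (p A)) (e A)" using A by (intro assoc) simp_all
  also have "\<dots> = e A" using A by (simp add: e_eq[symmetric] e_id)
  also have "cmp (e A) (e A) = e A" using A by (simp add: e_id)
  finally show ?thesis .
qed

lemma main:
  shows "process_theory_disc Obj M' src tgt cmp e tobj tmor I swp' disc
       \<and> (\<forall>A\<in>Obj. cmp (disc A) (e A) = disc A)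
       \<and> (\<forall>A\<in>Obj. leak M' src tgt cmp e tobj tmor disc A (L A)
           (cmp (tmor (e A) (e (L A))) (cmp (p A) (e A))))"
  unfolding process_theory_disc_def process_theory_def leak_def
  apply (intro conjI ballI impI)
  apply (simp_all del: mem_Collect_eq add: Mp_Mor e_Mp cmp_Mp Mp_l Mp_r tmor_Mp tmor_eIl tmor_eIr e_tensor[symmetric]
     swp'_Mp swp'_inv swp'_hex disc_Mp disc_e leak_Mp disc_tensor swp'_nat leak_eq)
  subgoal premises prm by (rule assoc[OF Mp_Mor[OF prm(1)] Mp_Mor[OF prm(2)] Mp_Mor[OF prm(3)] prm(4) prm(5)])
  apply (simp add: tobj_assoc)
  subgoal premises prm by (rule tmor_assoc[OF Mp_Mor[OF prm(1)] Mp_Mor[OF prm(2)] Mp_Mor[OF prm(3)]])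
  subgoal premises prm by (rule interchange[OF Mp_Mor[OF prm(1)] Mp_Mor[OF prm(2)] Mp_Mor[OF prm(3)] Mp_Mor[OF prm(4)] prm(5) prm(6)])
  apply (simp del: mem_Collect_eq add: e_tensor leak_Mp)
  apply (simp add: e_tensor leak_eq)
  done

end

theorem theorem1:
  fixes Obj :: "'o set" and Mor :: "'m set"
    and src tgt :: "'m \<Rightarrow> 'o" and cmp :: "'m \<Rightarrow> 'm \<Rightarrow> 'm" and idt :: "'o \<Rightarrow> 'm"
    and tobj :: "'o \<Rightarrow> 'o \<Rightarrow> 'o" and tmor :: "'m \<Rightarrow> 'm \<Rightarrow> 'm" and I :: 'o
    and swp :: "'o \<Rightarrow> 'o \<Rightarrow> 'm" and disc :: "'o \<Rightarrow> 'm"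
    and L :: "'o \<Rightarrow> 'o" and p :: "'o \<Rightarrow> 'm" and e :: "'o \<Rightarrow> 'm"
  assumes C: "process_theory_disc Obj Mor src tgt cmp idt tobj tmor I swp disc"
    and L_obj: "\<forall>A\<in>Obj. L A \<in> Obj"
    and p_typ: "\<forall>A\<in>Obj. p A \<in> Mor \<and> src (p A) = A \<and> tgt (p A) = tobj A (L A)"
    and p_causal: "\<forall>A\<in>Obj. causal src tgt cmp disc (p A)"
    and e_def: "\<forall>A. e A = cmp (tmor (idt A) (disc (L A))) (p A)"
    and e_idem: "\<forall>A\<in>Obj. cmp (e A) (e A) = e A"
    and L_tensor: "\<forall>A\<in>Obj. \<forall>B\<in>Obj. L (tobj A B) = tobj (L A) (L B)"
    and p_tensor: "\<forall>A\<in>Obj. \<forall>B\<in>Obj.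
        p (tobj A B) = cmp (tmor (tmor (idt A) (swp (L A) B)) (idt (L B))) (tmor (p A) (p B))"
  shows "process_theory_disc Obj
           {m. \<exists>A\<in>Obj. \<exists>B\<in>Obj. \<exists>f\<in>Mor. src f = A \<and> tgt f = B \<and> m = cmp (e B) (cmp f (e A))}
           src tgt cmp e tobj tmor I
           (\<lambda>A B. cmp (e (tobj B A)) (cmp (swp A B) (e (tobj A B))))
           disc
       \<and> (\<forall>A\<in>Obj. cmp (disc A) (e A) = disc A)
       \<and> (\<forall>A\<in>Obj. leak
           {m. \<exists>A\<in>Obj. \<exists>B\<in>Obj. \<exists>f\<in>Mor. src f = A \<and> tgt f = B \<and> m = cmp (e B) (cmp f (e A))}
           src tgt cmp e tobj tmor disc A (L A)
           (cmp (tmor (e A) (e (L A))) (cmp (p A) (e A))))"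
  proof -
  interpret pt Obj Mor src tgt cmp idt tobj tmor I swp disc L p e
    using assms by (unfold_locales) auto
  show ?thesis using main .
qed

end
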